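(* Let $B$ be a connected building set on $[n]$ and write $F(P_B)=\sum_{\alpha\models n}\zeta_\alpha(B)M_\alpha$. Then $$\sum_{\alpha\models n}(-1)^{k(\alpha)}\zeta_\alpha(B)=(-1)^nf_0(P_B),$$ where $f_0(P_B)$ is the number of vertices of $P_B$. Equivalently, if $\chi(P_B,m)=\sum_{\alpha\models n}\zeta_\alpha(B)\binom{m}{k(\alpha)}$ (a polynomial in $m$), then $\chi(P_B,-1)=(-1)^nf_0(P_B)$.
   Context: A building set on a finite set $V$ is a collection $B$ of nonempty subsets of $V$ such that $\{v\}\in B$ for all $v\in V$ and such that $I,J\in B$, $I\cap J\neq\emptyset$ imply $I\cup J\in B$; it is connected if $V\in B$. The nestohedron of $B$ is $P_B=\sum_{I\in B}\mathrm{Conv}\{e_i: i\in I\}\subset\mathbb{R}^V$. For a convex polytope $Q\subset\mathbb{R}^n$, $f:[n]\to\mathbb{N}=\{1,2,\dots\}$ is $Q$-generic if $x\mapsto\sum_i f(i)x_i$ attains its maximum over $Q$ at a unique point, and $F(Q)=\sum_{f\ Q\text{-generic}}x_{f(1)}\cdots x_{f(n)}$. For a composition $\alpha=(a_1,\dots,a_k)\models n$ of length $k(\alpha)=k$, $M_\alpha=\sum_{i_1<\dots<i_k}x_{i_1}^{a_1}\cdots x_{i_k}^{a_k}$. *)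

theory Defs
  imports "HOL-Analysis.Analysis"
begin

text \<open>The ground set [n] is modelled by a finite type 'n with n = CARD('n);
  points of R^[n] are vectors of type real^'n, and e_i = axis i 1.\<close>

definition building_set :: "'n set set \<Rightarrow> bool" where
  "building_set B \<longleftrightarrow>
     (\<forall>I\<in>B. I \<noteq> {}) \<and> (\<forall>v. {v} \<in> B) \<and>
     (\<forall>I\<in>B. \<forall>J\<in>B. I \<inter> J \<noteq> {} \<longrightarrow> I \<union> J \<in> B)"

definition connected_building_set :: "('n::finite) set set \<Rightarrow> bool" where
  "connected_building_set B \<longleftrightarrow> building_set B \<and> UNIV \<in> B"

definition nestohedron :: "('n::finite) set set \<Rightarrow> (real^'n) set" where
  "nestohedron B = {x. \<exists>p. (\<forall>I\<in>B. p I \<in> convex hull ((\<lambda>i. axis i (1::real)) ` I))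
                         \<and> x = (\<Sum>I\<in>B. p I)}"

definition generic :: "(real^'n) set \<Rightarrow> ('n \<Rightarrow> nat) \<Rightarrow> bool" where
  "generic Q f \<longleftrightarrow> (\<forall>i. 1 \<le> f i) \<and>
     (\<exists>!x. x \<in> Q \<and> (\<forall>y\<in>Q. (\<Sum>i\<in>UNIV. real (f i) * y $ i) \<le> (\<Sum>i\<in>UNIV. real (f i) * x $ i)))"

text \<open>Coefficient of the monomial prod_j x_j^(e j) in F(Q)
  = sum over Q-generic f of x_{f(1)} ... x_{f(n)}.\<close>
definition F_coeff :: "(real^'n::finite) set \<Rightarrow> (nat \<Rightarrow> nat) \<Rightarrow> nat" where
  "F_coeff Q e = card {f :: 'n \<Rightarrow> nat. generic Q f \<and> (\<forall>j. card {i. f i = j} = e j)}"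

text \<open>Compositions of n: lists of positive integers summing to n; k(alpha) = length alpha.\<close>
definition compositions :: "nat \<Rightarrow> nat list set" where
  "compositions n = {\<alpha>. (\<forall>a\<in>set \<alpha>. 0 < a) \<and> sum_list \<alpha> = n}"

text \<open>Coefficient of the monomial prod_j x_j^(e j) (variables x_1, x_2, ...) in M_alpha.\<close>
definition M_coeff :: "nat list \<Rightarrow> (nat \<Rightarrow> nat) \<Rightarrow> int" where
  "M_coeff \<alpha> e = (if \<exists>is. length is = length \<alpha> \<and> sorted_wrt (<) is \<and> (\<forall>i\<in>set is. 1 \<le> i)
                        \<and> (\<forall>t<length \<alpha>. e (is ! t) = \<alpha> ! t)
                        \<and> (\<forall>j. j \<notin> set is \<longrightarrow> e j = 0)
                   then 1 else 0)"

definition num_vertices :: "(real^'n::finite) set \<Rightarrow> nat" where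
  "num_vertices P = card {v. v extreme_point_of P}"

end

theory Submission
  imports Defs
begin

definition ee :: "'n::finite \<Rightarrow> real^'n" where "ee i = axis i 1"

definition dotc :: "('n::finite \<Rightarrow> real) \<Rightarrow> real^'n \<Rightarrow> real" where
  "dotc c x = (\<chi> i. c i) \<bullet> x"

definition pt :: "('n::finite) set set \<Rightarrow> ('n set \<Rightarrow> 'n) \<Rightarrow> real^'n" where
  "pt B G = (\<Sum>I\<in>B. ee (G I))"

definition good :: "('n::finite) set set \<Rightarrow> ('n \<Rightarrow> real) \<Rightarrow> ('n set \<Rightarrow> 'n) \<Rightarrow> bool" where
  "good B c G \<longleftrightarrow> (\<forall>I\<in>B. G I \<in> I \<and> (\<forall>j\<in>I. j \<noteq> G I \<longrightarrow> c j < c (G I)))"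

lemma axis_nth_neq: "i \<noteq> j \<Longrightarrow> axis j x $ i = 0"
  by (simp add: axis_def)

lemma dotc_ee[simp]: "dotc c (ee j) = c j"
  by (simp add: dotc_def ee_def inner_axis)

lemma dotc_sum: "dotc c (\<Sum>I\<in>A. f I) = (\<Sum>I\<in>A. dotc c (f I))"
  by (simp add: dotc_def inner_sum_right)

lemma dotc_add: "dotc c (x + y) = dotc c x + dotc c y"
  by (simp add: dotc_def inner_add_right)

lemma dotc_pt: "dotc c (pt B G) = (\<Sum>I\<in>B. c (G I))"
  by (simp add: pt_def dotc_sum)

lemma hull_le:
  assumes "\<forall>i\<in>I. a \<bullet> ee i \<le> b" "y \<in> convex hull (ee ` I)"
  shows "a \<bullet> y \<le> b"
proof -
  have "convex hull (ee ` I) \<subseteq> {x. a \<bullet> x \<le> b}"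
    by (rule hull_minimal) (use assms(1) convex_halfspace_le in auto)
  then show ?thesis using assms(2) by auto
qed

lemma hull_eq:
  assumes "\<forall>i\<in>I. a \<bullet> ee i = b" "y \<in> convex hull (ee ` I)"
  shows "a \<bullet> y = b"
proof -
  have "convex hull (ee ` I) \<subseteq> {x. a \<bullet> x = b}"
    by (rule hull_minimal) (use assms(1) convex_hyperplane in auto)
  then show ?thesis using assms(2) by auto
qed

lemma hull_nonneg:
  assumes "y \<in> convex hull (ee ` I)" shows "0 \<le> y $ j"
proof -
  have "(- axis j 1) \<bullet> y \<le> 0"
    by (rule hull_le[OF _ assms]) (auto simp: ee_def inner_axis_axis)
  then show ?thesis by (simp add: inner_axis')
qed

lemma hull_sum1:
  assumes "y \<in> convex hull (ee ` I)" shows "(\<Sum>j\<in>UNIV. y $ j) = 1"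
proof -
  have "(\<chi> i. (1::real)) \<bullet> y = 1"
    by (rule hull_eq[OF _ assms]) (auto simp: ee_def inner_axis)
  then show ?thesis by (simp add: inner_vec_def)
qed

lemma hull_dotc_le:
  assumes "\<forall>i\<in>I. c i \<le> m" "y \<in> convex hull (ee ` I)"
  shows "dotc c y \<le> m"
  unfolding dotc_def by (rule hull_le[OF _ assms(2)]) (use assms(1) in \<open>auto simp: ee_def inner_axis\<close>)

lemma hull_unique:
  assumes fin: "finite I" and g: "g \<in> I" and lt: "\<forall>j\<in>I. j \<noteq> g \<longrightarrow> c j < c g"
    and y: "y \<in> convex hull (ee ` I)" and ge: "c g \<le> dotc c y"
  shows "y = ee g"
proof -
  define \<delta> where "\<delta> = (if I - {g} = {} then 1 else c g - Max (c ` (I - {g})))"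
  have dpos: "\<delta> > 0"
  proof (cases "I - {g} = {}")
    case False
    then have "Max (c ` (I - {g})) \<in> c ` (I - {g})" using fin by (intro Max_in) auto
    then show ?thesis using False lt by (auto simp: \<delta>_def)
  qed (simp add: \<delta>_def)
  have dle: "c j \<le> c g - \<delta>" if "j \<in> I" "j \<noteq> g" for j
  proof -
    have "c j \<le> Max (c ` (I - {g}))" using fin that by (intro Max_ge) auto
    then show ?thesis using that by (auto simp: \<delta>_def)
  qed
  have "((\<chi> i. c i) - \<delta> *\<^sub>R axis g 1) \<bullet> y \<le> c g - \<delta>"
  proof (rule hull_le[OF _ y], intro ballI)
    fix i assume i: "i \<in> I"
    show "((\<chi> i. c i) - \<delta> *\<^sub>R axis g 1) \<bullet> ee i \<le> c g - \<delta>"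
    proof (cases "i = g")
      case True then show ?thesis by (simp add: ee_def inner_diff_left inner_axis)
    next
      case False then show ?thesis using dle[OF i False] \<open>i \<noteq> g\<close> by (simp add: ee_def inner_diff_left inner_axis axis_nth_neq[OF \<open>i \<noteq> g\<close>])
    qed
  qed
  then have "dotc c y - \<delta> * y $ g \<le> c g - \<delta>"
    by (simp add: dotc_def inner_diff_left inner_axis')
  with ge dpos have yg: "y $ g \<ge> 1"
    by (smt (verit) mult_le_cancel_left1)
  have s: "(\<Sum>j\<in>UNIV. y $ j) = y $ g + (\<Sum>j\<in>UNIV - {g}. y $ j)"
    by (simp add: sum.remove)
  have nn: "\<forall>j\<in>UNIV - {g}. 0 \<le> y $ j" using hull_nonneg[OF y] by auto
  have "(\<Sum>j\<in>UNIV - {g}. y $ j) \<ge> 0" using nn by (intro sum_nonneg) auto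
  with s hull_sum1[OF y] yg have z: "(\<Sum>j\<in>UNIV - {g}. y $ j) = 0" and y1: "y $ g = 1"
    by linarith+
  have "\<forall>j\<in>UNIV - {g}. y $ j = 0"
    using z nn sum_nonneg_eq_0_iff[of "UNIV - {g}" "\<lambda>j. y $ j"] by auto
  then show ?thesis using y1 by (auto simp: vec_eq_iff ee_def axis_def)
qed

lemma nesto_set_sum:
  "nestohedron B = (\<Sum>I\<in>B. convex hull (ee ` I))"
  by (subst set_sum_alt) (auto simp: nestohedron_def ee_def)

lemma nesto_polytope: "polytope (nestohedron B)"
proof -
  have "nestohedron B = convex hull (\<Sum>I\<in>B. ee ` I)"
    by (simp add: nesto_set_sum convex_hull_set_sum)
  moreover have "finite (\<Sum>I\<in>B. ee ` I)" by (intro finite_set_sum) auto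
  ultimately show ?thesis unfolding polytope_def by blast
qed

lemma nesto_mem: "x \<in> nestohedron B \<longleftrightarrow> (\<exists>p. (\<forall>I\<in>B. p I \<in> convex hull (ee ` I)) \<and> x = (\<Sum>I\<in>B. p I))"
  by (simp add: nestohedron_def ee_def)

lemma pt_mem: "\<forall>I\<in>B. G I \<in> I \<Longrightarrow> pt B G \<in> nestohedron B"
  unfolding nesto_mem pt_def by (rule exI[of _ "\<lambda>I. ee (G I)"]) (auto intro: hull_inc)

lemma sum_le_eq:
  fixes f g :: "'a \<Rightarrow> real"
  assumes "finite A" "\<forall>I\<in>A. f I \<le> g I" "sum f A = sum g A" "I \<in> A"
  shows "f I = g I"
proof -
  have "(\<Sum>I\<in>A. g I - f I) = 0" using assms(3) by (simp add: sum_subtractf)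
  then have "\<forall>I\<in>A. g I - f I = 0"
    using assms(1,2) sum_nonneg_eq_0_iff[of A "\<lambda>I. g I - f I"] by auto
  then show ?thesis using assms(4) by auto
qed

lemma L1:
  assumes gd: "good B c G"
  shows "pt B G \<in> nestohedron B"
    and "\<forall>x\<in>nestohedron B. dotc c x \<le> dotc c (pt B G)"
    and "\<forall>x\<in>nestohedron B. dotc c x = dotc c (pt B G) \<longrightarrow> x = pt B G"
proof -
  show "pt B G \<in> nestohedron B" using gd by (intro pt_mem) (auto simp: good_def)
  have le: "dotc c y \<le> c (G I)" if I: "I \<in> B" and y: "y \<in> convex hull (ee ` I)" for y I
  proof -
    have "\<forall>i\<in>I. c i \<le> c (G I)" using gd I unfolding good_def by (metis less_imp_le order_refl)
    then show ?thesis using hull_dotc_le y by blast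
  qed
  show "\<forall>x\<in>nestohedron B. dotc c x \<le> dotc c (pt B G)"
  proof
    fix x assume "x \<in> nestohedron B"
    then obtain p where p: "\<forall>I\<in>B. p I \<in> convex hull (ee ` I)" and x: "x = (\<Sum>I\<in>B. p I)"
      unfolding nesto_mem by blast
    show "dotc c x \<le> dotc c (pt B G)"
      unfolding x dotc_sum dotc_pt using p le by (meson sum_mono)
  qed
  show "\<forall>x\<in>nestohedron B. dotc c x = dotc c (pt B G) \<longrightarrow> x = pt B G"
  proof (intro ballI impI)
    fix x assume "x \<in> nestohedron B" and eq: "dotc c x = dotc c (pt B G)"
    then obtain p where p: "\<forall>I\<in>B. p I \<in> convex hull (ee ` I)" and x: "x = (\<Sum>I\<in>B. p I)"
      unfolding nesto_mem by blast
    have "p I = ee (G I)" if I: "I \<in> B" for I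
    proof -
      have le': "\<forall>I\<in>B. dotc c (p I) \<le> c (G I)" using p le by blast
      have eq': "(\<Sum>I\<in>B. dotc c (p I)) = (\<Sum>I\<in>B. c (G I))"
        using eq unfolding x dotc_sum dotc_pt .
      have "dotc c (p I) = c (G I)"
        by (rule sum_le_eq[OF finite le' eq' I])
      then show ?thesis using gd I p by (intro hull_unique[of I]) (auto simp: good_def)
    qed
    then show "x = pt B G" unfolding x pt_def by simp
  qed
qed

lemma L2:
  assumes Bne: "\<forall>I\<in>B. I \<noteq> {}" and v: "v \<in> nestohedron B"
    and mx: "\<forall>y\<in>nestohedron B. dotc c y \<le> dotc c v"
    and un: "\<forall>y\<in>nestohedron B. dotc c y = dotc c v \<longrightarrow> y = v"
  shows "\<exists>G. good B c G \<and> v = pt B G"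
proof -
  have ex: "\<exists>i. i \<in> I \<and> (\<forall>j\<in>I. c j \<le> c i)" if "I \<in> B" for I
  proof -
    have "Max (c ` I) \<in> c ` I" using Bne that by (intro Max_in) auto
    then obtain i where "i \<in> I" "c i = Max (c ` I)" by auto
    then show ?thesis by (intro exI[of _ i]) auto
  qed
  define Gm where "Gm I = (SOME i. i \<in> I \<and> (\<forall>j\<in>I. c j \<le> c i))" for I
  have Gm: "Gm I \<in> I \<and> (\<forall>j\<in>I. c j \<le> c (Gm I))" if "I \<in> B" for I
    unfolding Gm_def using someI_ex[OF ex[OF that]] .
  have key: "pt B G = v" if G: "\<forall>I\<in>B. G I \<in> I \<and> c (G I) = c (Gm I)" for G
  proof -
    have mem: "pt B G \<in> nestohedron B" using G by (intro pt_mem) auto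
    obtain p where p: "\<forall>I\<in>B. p I \<in> convex hull (ee ` I)" and vp: "v = (\<Sum>I\<in>B. p I)"
      using v unfolding nesto_mem by blast
    have "dotc c v \<le> dotc c (pt B G)"
      unfolding vp dotc_sum dotc_pt
    proof (rule sum_mono)
      fix I assume I: "I \<in> B"
      have "\<forall>i\<in>I. c i \<le> c (G I)" using G Gm[OF I] I by auto
      then show "dotc c (p I) \<le> c (G I)" using p I hull_dotc_le by blast
    qed
    with mx mem have "dotc c (pt B G) = dotc c v" by (meson antisym)
    then show ?thesis using un mem by auto
  qed
  have v1: "pt B Gm = v" using Gm by (intro key) auto
  have "good B c Gm"
    unfolding good_def
  proof (intro ballI conjI impI)
    fix I assume I: "I \<in> B"
    show "Gm I \<in> I" using Gm[OF I] by auto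
    fix j assume j: "j \<in> I" "j \<noteq> Gm I"
    show "c j < c (Gm I)"
    proof (rule ccontr)
      assume "\<not> c j < c (Gm I)"
      then have cj: "c j = c (Gm I)" using Gm[OF I] j by force
      define G' where "G' = Gm(I := j)"
      have "pt B G' = v" using Gm j cj by (intro key) (auto simp: G'_def)
      moreover have "pt B G' = (\<Sum>K\<in>B - {I}. ee (Gm K)) + ee j"
      proof -
        have "(\<Sum>K\<in>B - {I}. ee (G' K)) = (\<Sum>K\<in>B - {I}. ee (Gm K))"
          by (rule sum.cong) (auto simp: G'_def)
        then show ?thesis
          unfolding pt_def using sum.remove[OF finite I, of "\<lambda>K. ee (G' K)"] by (simp add: G'_def add.commute)
      qed
      moreover have "pt B Gm = (\<Sum>K\<in>B - {I}. ee (Gm K)) + ee (Gm I)"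
        unfolding pt_def using sum.remove[OF finite I, of "\<lambda>K. ee (Gm K)"] by (simp add: add.commute)
      ultimately have "ee j = ee (Gm I)" using v1 by simp
      then show False using j by (simp add: ee_def axis_eq_axis)
    qed
  qed
  then show ?thesis using v1 by auto
qed


lemma alt_pow_gen:
  assumes "finite M"
  shows "(\<Sum>T\<in>Pow M. (-1::int) ^ card T) = (if M = {} then 1 else 0)"
  using assms
proof (induction M rule: finite_induct)
  case empty then show ?case by simp
next
  case (insert x F)
  have inj: "inj_on (insert x) (Pow F)"
    using insert.hyps(2) by (auto simp: inj_on_def)
  have disj: "Pow F \<inter> insert x ` Pow F = {}" using insert.hyps(2) by auto
  have "(\<Sum>T\<in>Pow (insert x F). (-1::int) ^ card T)
        = (\<Sum>T\<in>Pow F. (-1::int) ^ card T) + (\<Sum>T\<in>insert x ` Pow F. (-1::int) ^ card T)"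
    unfolding Pow_insert using insert.hyps(1) disj by (intro sum.union_disjoint) auto
  also have "(\<Sum>T\<in>insert x ` Pow F. (-1::int) ^ card T) = (\<Sum>T\<in>Pow F. (-1::int) ^ card (insert x T))"
    by (rule sum.reindex[OF inj, unfolded comp_def])
  also have "\<dots> = (\<Sum>T\<in>Pow F. - ((-1::int) ^ card T))"
  proof (rule sum.cong)
    fix T assume "T \<in> Pow F"
    then have "finite T" "x \<notin> T" using insert.hyps finite_subset by auto
    then show "(-1::int) ^ card (insert x T) = - ((-1) ^ card T)" by simp
  qed simp
  finally show ?case by (simp add: sum_negf)
qed

lemma alt_pow_ne:
  assumes "finite M" "M \<noteq> {}"
  shows "(\<Sum>T\<in>Pow M - {{}}. (-1::int) ^ card T) = -1"
proof -
  have "(\<Sum>T\<in>Pow M. (-1::int) ^ card T) = (-1::int) ^ card ({}::'a set) + (\<Sum>T\<in>Pow M - {{}}. (-1::int) ^ card T)"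
    using assms(1) by (intro sum.remove) auto
  then show ?thesis using alt_pow_gen[OF assms(1)] assms(2) by simp
qed

definition W :: "('n \<times> 'n) set \<Rightarrow> 'n set \<Rightarrow> ('n \<Rightarrow> nat) set" where
  "W R S = {f. (\<forall>i. i \<notin> S \<longrightarrow> f i = 0) \<and> f ` S = {1..card (f ` S)}
              \<and> (\<forall>a b. a \<in> S \<longrightarrow> b \<in> S \<longrightarrow> (a, b) \<in> R \<longrightarrow> f b < f a)}"

lemma finite_bounded_funs: "finite {f :: 'n::finite \<Rightarrow> nat. \<forall>i. f i \<le> N}"
proof -
  have "{f :: 'n::finite \<Rightarrow> nat. \<forall>i. f i \<le> N} = PiE UNIV (\<lambda>_. {..N})"
    by (auto simp: PiE_def Pi_def)
  then show ?thesis by (simp add: finite_PiE)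
qed

lemma finite_W: "finite (W R (S :: 'n::finite set))"
proof (rule finite_subset[OF _ finite_bounded_funs[of "card S"]])
  show "W R S \<subseteq> {f. \<forall>i. f i \<le> card S}"
  proof safe
    fix f i assume f: "f \<in> W R S"
    show "f i \<le> card S"
    proof (cases "i \<in> S")
      case True
      then have "f i \<in> {1..card (f ` S)}" using f unfolding W_def by blast
      moreover have "card (f ` S) \<le> card S" by (rule card_image_le) simp
      ultimately show ?thesis by auto
    next
      case False then show ?thesis using f unfolding W_def by auto
    qed
  qed
qed

lemma neg_pow_diff: "b \<le> a \<Longrightarrow> (-1::int) ^ (a - b) = (-1) ^ a * (-1) ^ b"
proof -
  assume "b \<le> a"
  then have "(-1::int) ^ a = (-1) ^ (a - b) * (-1) ^ b" by (metis le_add_diff_inverse2 power_add)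
  then have "(-1::int) ^ a * (-1) ^ b = (-1) ^ (a - b) * ((-1) ^ b * (-1) ^ b)" by simp
  also have "(-1::int) ^ b * (-1) ^ b = 1" by (metis power_add power_minus1_even semiring_norm(87) mult_2 left_minus_one_mult_self)
  finally show ?thesis by simp
qed

lemma fiber_sum:
  fixes S T :: "'n::finite set"
  assumes T: "T \<subseteq> S" "T \<noteq> {}" and TM: "\<forall>x\<in>T. \<forall>y\<in>S. (y, x) \<notin> R"
  shows "(\<Sum>f\<in>{f \<in> W R S. {i \<in> S. f i = card (f ` S)} = T}. (-1::int) ^ card (f ` S))
         = - (\<Sum>h\<in>W R (S - T). (-1::int) ^ card (h ` (S - T)))"
proof -
  define r where "r f = (\<lambda>i. if i \<in> T then 0 else f i)" for f :: "'n \<Rightarrow> nat"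
  define ext where "ext h = (\<lambda>i. if i \<in> T then card (h ` (S - T)) + 1 else h i)" for h :: "'n \<Rightarrow> nat"
  have finS: "finite S" by simp
  have F1: "f ` (S - T) = {1..card (f ` S) - 1} \<and> card (f ` S) \<ge> 1"
    if f: "f \<in> W R S" and tp: "{i \<in> S. f i = card (f ` S)} = T" for f
  proof -
    define k where "k = card (f ` S)"
    have fS: "f ` S = {1..k}" using f unfolding W_def k_def by blast
    obtain t where "t \<in> T" using T by auto
    then have "t \<in> S" "f t = k" using tp k_def by auto
    then have k1: "k \<ge> 1" using fS by auto
    have "f ` (S - T) = {1..k-1}"
    proof
      show "f ` (S - T) \<subseteq> {1..k-1}"
      proof
        fix j assume "j \<in> f ` (S - T)"
        then obtain i where i: "i \<in> S" "i \<notin> T" "j = f i" by auto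
        then have "f i \<noteq> k" using tp k_def by auto
        moreover have "f i \<in> {1..k}" using fS i by auto
        ultimately show "j \<in> {1..k-1}" using i by auto
      qed
      show "{1..k-1} \<subseteq> f ` (S - T)"
      proof
        fix j assume j: "j \<in> {1..k-1}"
        then have "j \<in> f ` S" using fS by auto
        then obtain i where i: "i \<in> S" "j = f i" by auto
        then have "i \<notin> T" using tp j k_def by auto
        then show "j \<in> f ` (S - T)" using i by auto
      qed
    qed
    then show ?thesis using k1 k_def by simp
  qed
  show ?thesis
  proof (subst sum_negf[symmetric], rule sum.reindex_bij_witness[where i=ext and j=r])
    fix f assume "f \<in> {f \<in> W R S. {i \<in> S. f i = card (f ` S)} = T}"
    then have f: "f \<in> W R S" and tp: "{i \<in> S. f i = card (f ` S)} = T" by auto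
    have f1: "f ` (S - T) = {1..card (f ` S) - 1}" "card (f ` S) \<ge> 1" using F1[OF f tp] by auto
    have rimg: "r f ` (S - T) = f ` (S - T)" unfolding r_def by auto
    have cr: "card (r f ` (S - T)) = card (f ` S) - 1" using rimg f1 by simp
    show "ext (r f) = f"
    proof
      fix i show "ext (r f) i = f i"
      proof (cases "i \<in> T")
        case True
        then have "f i = card (f ` S)" using tp by blast
        then show ?thesis using True cr f1(2) by (simp add: ext_def)
      next
        case False then show ?thesis by (simp add: ext_def r_def)
      qed
    qed
    show "r f \<in> W R (S - T)"
      unfolding W_def
    proof (intro CollectI conjI allI impI)
      fix i assume "i \<notin> S - T" then show "r f i = 0"
        using f unfolding W_def r_def by auto
    next
      show "r f ` (S - T) = {1..card (r f ` (S - T))}" using cr rimg f1 by simp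
    next
      fix a b assume "a \<in> S - T" "b \<in> S - T" "(a, b) \<in> R"
      then show "r f b < r f a" using f unfolding W_def r_def by auto
    qed
    show "- ((-1::int) ^ card (r f ` (S - T))) = (-1) ^ card (f ` S)"
    proof -
      obtain k' where "card (f ` S) = Suc k'" using f1(2) by (metis Suc_le_D One_nat_def)
      then show ?thesis using cr by simp
    qed
  next
    fix h assume h: "h \<in> W R (S - T)"
    define k where "k = card (h ` (S - T))"
    have hS: "h ` (S - T) = {1..k}" using h unfolding W_def k_def by blast
    have h0: "\<And>i. i \<notin> S - T \<Longrightarrow> h i = 0" using h unfolding W_def by blast
    have eimg: "ext h ` S = {1..k+1}"
    proof -
      have "ext h ` S = h ` (S - T) \<union> ext h ` T" unfolding ext_def using T by auto
      also have "ext h ` T = {k+1}" using T unfolding ext_def k_def by auto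
      finally show ?thesis using hS by auto
    qed
    have ck: "card (ext h ` S) = k + 1" using eimg by simp
    show "r (ext h) = h"
    proof
      fix i show "r (ext h) i = h i" using h0[of i] by (auto simp: r_def ext_def)
    qed
    show "ext h \<in> {f \<in> W R S. {i \<in> S. f i = card (f ` S)} = T}"
    proof (intro CollectI conjI)
      show "ext h \<in> W R S"
        unfolding W_def
      proof (intro CollectI conjI allI impI)
        fix i assume "i \<notin> S" then show "ext h i = 0" using T h0[of i] by (auto simp: ext_def)
      next
        show "ext h ` S = {1..card (ext h ` S)}" using eimg ck by simp
      next
        fix a b assume ab: "a \<in> S" "b \<in> S" "(a, b) \<in> R"
        then have bT: "b \<notin> T" using TM by blast
        then have hb: "h b \<in> {1..k}" using hS ab by auto
        show "ext h b < ext h a"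
        proof (cases "a \<in> T")
          case True then show ?thesis using bT hb by (auto simp: ext_def k_def)
        next
          case False
          have "h b < h a" using h ab False bT unfolding W_def by blast
          then show ?thesis using False bT by (simp add: ext_def)
        qed
      qed
      show "{i \<in> S. ext h i = card (ext h ` S)} = T"
      proof
        show "{i \<in> S. ext h i = card (ext h ` S)} \<subseteq> T"
        proof
          fix i assume i: "i \<in> {i \<in> S. ext h i = card (ext h ` S)}"
          show "i \<in> T"
          proof (rule ccontr)
            assume "i \<notin> T"
            then have "h i \<in> {1..k}" using i hS by auto
            then show False using i ck \<open>i \<notin> T\<close> by (auto simp: ext_def)
          qed
        qed
        show "T \<subseteq> {i \<in> S. ext h i = card (ext h ` S)}" using T ck by (auto simp: ext_def k_def)
      qed
    qed
  qed
qed

lemma A_rec: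
  fixes R :: "('n::finite \<times> 'n) set" and f0 :: "'n \<Rightarrow> nat"
  assumes wit: "\<forall>(a, b)\<in>R. f0 b < f0 a"
  shows "card S = m \<Longrightarrow> (\<Sum>f\<in>W R S. (-1::int) ^ card (f ` S)) = (-1) ^ m"
proof (induction m arbitrary: S rule: less_induct)
  case (less m)
  show ?case
  proof (cases "S = {}")
    case True
    have "W R S = {\<lambda>_. 0}" using True by (auto simp: W_def)
    then show ?thesis using True less.prems by simp
  next
    case False
    have finS: "finite S" by simp
    define M where "M = {x \<in> S. \<forall>y\<in>S. (y, x) \<notin> R}"
    have Mne: "M \<noteq> {}"
    proof -
      have "Max (f0 ` S) \<in> f0 ` S" using False by (intro Max_in) auto
      then obtain x where x: "x \<in> S" "f0 x = Max (f0 ` S)" by auto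
      have "x \<in> M"
        unfolding M_def
      proof (intro CollectI conjI ballI x(1))
        fix y assume "y \<in> S"
        then have "f0 y \<le> f0 x" using x by simp
        then show "(y, x) \<notin> R" using wit by auto
      qed
      then show ?thesis by auto
    qed
    have finM: "finite M" by simp
    define top where "top f = {i \<in> S. f i = card (f ` S)}" for f :: "'n \<Rightarrow> nat"
    have topM: "top ` W R S \<subseteq> Pow M - {{}}"
    proof
      fix T assume "T \<in> top ` W R S"
      then obtain f where f: "f \<in> W R S" and Tf: "T = top f" by auto
      have fS: "f ` S = {1..card (f ` S)}" using f unfolding W_def by blast
      have "card (f ` S) \<ge> 1" using False finS by (simp add: card_gt_0_iff Suc_le_eq)
      then have "card (f ` S) \<in> f ` S" using fS by auto
      then have "T \<noteq> {}" unfolding Tf top_def by auto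
      moreover have "T \<subseteq> M"
      proof
        fix x assume "x \<in> T"
        then have x: "x \<in> S" "f x = card (f ` S)" unfolding Tf top_def by auto
        have "(y, x) \<notin> R" if y: "y \<in> S" for y
        proof
          assume "(y, x) \<in> R"
          then have "f x < f y" using f x y unfolding W_def by blast
          moreover have "f y \<le> card (f ` S)" using fS y by auto
          ultimately show False using x by simp
        qed
        then show "x \<in> M" using x unfolding M_def by auto
      qed
      ultimately show "T \<in> Pow M - {{}}" by auto
    qed
    have "(\<Sum>f\<in>W R S. (-1::int) ^ card (f ` S))
          = (\<Sum>T\<in>Pow M - {{}}. \<Sum>f\<in>{f \<in> W R S. top f = T}. (-1::int) ^ card (f ` S))"
      using sum.group[OF finite_W _ topM, of "\<lambda>f. (-1::int) ^ card (f ` S)"] finM by simp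
    also have "\<dots> = (\<Sum>T\<in>Pow M - {{}}. - ((-1) ^ card S * (-1) ^ card T))"
    proof (rule sum.cong[OF refl])
      fix T assume T: "T \<in> Pow M - {{}}"
      then have TS: "T \<subseteq> S" "T \<noteq> {}" and TM: "\<forall>x\<in>T. \<forall>y\<in>S. (y, x) \<notin> R"
        unfolding M_def by auto
      have "(\<Sum>f\<in>{f \<in> W R S. top f = T}. (-1::int) ^ card (f ` S))
            = - (\<Sum>h\<in>W R (S - T). (-1::int) ^ card (h ` (S - T)))"
        unfolding top_def by (rule fiber_sum[OF TS TM])
      also have c: "card (S - T) = card S - card T" using TS by (simp add: card_Diff_subset)
      have cT: "card T > 0" using TS by (simp add: card_gt_0_iff)
      have "card T \<le> card S" using TS by (simp add: card_mono)
      then have lt: "card S - card T < m" using cT less.prems by linarith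
      have "(\<Sum>h\<in>W R (S - T). (-1::int) ^ card (h ` (S - T))) = (-1) ^ (card S - card T)"
        by (rule less.IH[OF lt c])
      also have "\<dots> = (-1) ^ card S * (-1) ^ card T"
        using TS finS by (intro neg_pow_diff card_mono) auto
      finally show "(\<Sum>f\<in>{f \<in> W R S. top f = T}. (-1::int) ^ card (f ` S)) = - ((-1) ^ card S * (-1) ^ card T)" 
        by simp
    qed
    also have "\<dots> = - ((-1) ^ card S * (\<Sum>T\<in>Pow M - {{}}. (-1::int) ^ card T))"
      by (simp add: sum_negf sum_distrib_left)
    also have "\<dots> = (-1) ^ m" using alt_pow_ne[OF finM Mne] less.prems by simp
    finally show ?thesis .
  qed
qed


declare upt_Suc[simp del]

definition ea :: "nat list \<Rightarrow> nat \<Rightarrow> nat" where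
  "ea \<alpha> j = (if 1 \<le> j \<and> j \<le> length \<alpha> then \<alpha> ! (j - 1) else 0)"

definition content :: "('n \<Rightarrow> nat) \<Rightarrow> nat list" where
  "content f = map (\<lambda>j. card {i. f i = j}) [1..<card (range f) + 1]"

lemma length_le_sum_list: "\<forall>a\<in>set xs. 0 < (a::nat) \<Longrightarrow> length xs \<le> sum_list xs"
  by (induction xs) auto

lemma finite_compositions: "finite (compositions n)"
proof (rule finite_subset[OF _ finite_lists_length_le[of "{0..n}" n]])
  show "compositions n \<subseteq> {xs. set xs \<subseteq> {0..n} \<and> length xs \<le> n}"
  proof safe
    fix xs x assume xs: "xs \<in> compositions n" and x: "x \<in> set xs"
    then show "x \<in> {0..n}" unfolding compositions_def using member_le_sum_list[OF x] by auto
  next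
    fix xs assume xs: "xs \<in> compositions n"
    then show "length xs \<le> n" unfolding compositions_def using length_le_sum_list by auto
  qed
qed simp

lemma ea_pos: "\<forall>a\<in>set \<alpha>. 0 < a \<Longrightarrow> 0 < ea \<alpha> j \<longleftrightarrow> 1 \<le> j \<and> j \<le> length \<alpha>"
  by (auto simp: ea_def)

lemma M_delta:
  assumes a: "\<forall>a\<in>set \<alpha>. 0 < a" and b: "\<forall>a\<in>set \<beta>. 0 < a"
  shows "M_coeff \<beta> (ea \<alpha>) = (if \<beta> = \<alpha> then 1 else 0)"
proof (cases "\<beta> = \<alpha>")
  case True
  let ?is = "[1..<length \<alpha> + 1]"
  have "length ?is = length \<beta> \<and> sorted_wrt (<) ?is \<and> (\<forall>i\<in>set ?is. 1 \<le> i)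
          \<and> (\<forall>t<length \<beta>. ea \<alpha> (?is ! t) = \<beta> ! t) \<and> (\<forall>j. j \<notin> set ?is \<longrightarrow> ea \<alpha> j = 0)"
    using True by (auto simp: ea_def nth_upt)
  then have ex: "\<exists>is. length is = length \<beta> \<and> sorted_wrt (<) is \<and> (\<forall>i\<in>set is. 1 \<le> i)
          \<and> (\<forall>t<length \<beta>. ea \<alpha> (is ! t) = \<beta> ! t) \<and> (\<forall>j. j \<notin> set is \<longrightarrow> ea \<alpha> j = 0)"
    by blast
  have "M_coeff \<beta> (ea \<alpha>) = 1" unfolding M_coeff_def by (rule if_P[OF ex])
  then show ?thesis using True by simp
next
  case False
  have "\<not> (\<exists>is. length is = length \<beta> \<and> sorted_wrt (<) is \<and> (\<forall>i\<in>set is. 1 \<le> i)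
          \<and> (\<forall>t<length \<beta>. ea \<alpha> (is ! t) = \<beta> ! t) \<and> (\<forall>j. j \<notin> set is \<longrightarrow> ea \<alpha> j = 0))"
  proof
    assume "\<exists>is. length is = length \<beta> \<and> sorted_wrt (<) is \<and> (\<forall>i\<in>set is. 1 \<le> i)
          \<and> (\<forall>t<length \<beta>. ea \<alpha> (is ! t) = \<beta> ! t) \<and> (\<forall>j. j \<notin> set is \<longrightarrow> ea \<alpha> j = 0)"
    then obtain "is" where len: "length is = length \<beta>" and srt: "sorted_wrt (<) is"
      and val: "\<forall>t<length \<beta>. ea \<alpha> (is ! t) = \<beta> ! t" and out: "\<forall>j. j \<notin> set is \<longrightarrow> ea \<alpha> j = 0"
      by blast
    have set_is: "set is = {1..<length \<alpha> + 1}"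
    proof
      show "set is \<subseteq> {1..<length \<alpha> + 1}"
      proof
        fix i assume "i \<in> set is"
        then obtain t where t: "t < length is" "i = is ! t" by (auto simp: in_set_conv_nth)
        then have "ea \<alpha> i = \<beta> ! t" using val len by auto
        moreover have "0 < \<beta> ! t" using b t len by auto
        ultimately have "0 < ea \<alpha> i" by simp
        then show "i \<in> {1..<length \<alpha> + 1}" using ea_pos[OF a] by auto
      qed
      show "{1..<length \<alpha> + 1} \<subseteq> set is"
      proof
        fix j assume "j \<in> {1..<length \<alpha> + 1}"
        then have "0 < ea \<alpha> j" using ea_pos[OF a] by auto
        then show "j \<in> set is" using out by auto
      qed
    qed
    have "is = [1..<length \<alpha> + 1]"
      using srt set_is by (intro sorted_distinct_set_unique) (auto simp: strict_sorted_iff)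
    then have "\<beta> = \<alpha>"
      using len val by (intro nth_equalityI) (auto simp: ea_def nth_upt)
    then show False using False by simp
  qed
  then show ?thesis unfolding M_coeff_def using False by simp
qed

lemma zeta_eq:
  assumes hyp: "\<forall>e. int (F_coeff Q e) = (\<Sum>\<alpha>\<in>compositions n. \<zeta> \<alpha> * M_coeff \<alpha> e)"
    and a: "\<alpha> \<in> compositions n"
  shows "\<zeta> \<alpha> = int (F_coeff Q (ea \<alpha>))"
proof -
  have "(\<Sum>\<beta>\<in>compositions n. \<zeta> \<beta> * M_coeff \<beta> (ea \<alpha>)) = (\<Sum>\<beta>\<in>compositions n. if \<alpha> = \<beta> then \<zeta> \<beta> else 0)"
  proof (rule sum.cong[OF refl])
    fix \<beta> assume "\<beta> \<in> compositions n"
    then show "\<zeta> \<beta> * M_coeff \<beta> (ea \<alpha>) = (if \<alpha> = \<beta> then \<zeta> \<beta> else 0)"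
      using a by (subst M_delta) (auto simp: compositions_def)
  qed
  also have "\<dots> = \<zeta> \<alpha>" using a finite_compositions by simp
  finally show ?thesis using hyp by simp
qed

lemma finite_bounded_funs': "finite {f :: 'n::finite \<Rightarrow> nat. \<forall>i. f i \<le> N}"
proof -
  have "{f :: 'n::finite \<Rightarrow> nat. \<forall>i. f i \<le> N} = PiE UNIV (\<lambda>_. {..N})"
    by (auto simp: PiE_def Pi_def)
  then show ?thesis by (simp add: finite_PiE)
qed

lemma finite_surjlike: "finite {f :: 'n::finite \<Rightarrow> nat. P f \<and> range f = {1..card (range f)}}"
proof (rule finite_subset[OF _ finite_bounded_funs'[of "CARD('n)"]])
  show "{f :: 'n::finite \<Rightarrow> nat. P f \<and> range f = {1..card (range f)}} \<subseteq> {f. \<forall>i. f i \<le> CARD('n)}"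
  proof safe
    fix f :: "'n \<Rightarrow> nat" and i assume r: "range f = {1..card (range f)}"
    have "f i \<in> {1..card (range f)}" using r by (metis rangeI)
    moreover have "card (range f) \<le> CARD('n)" by (rule card_image_le) simp
    ultimately show "f i \<le> CARD('n)" by auto
  qed
qed

lemma group_compositions:
  fixes P :: "('n::finite \<Rightarrow> nat) \<Rightarrow> bool"
  shows "(\<Sum>f\<in>{f. P f \<and> range f = {1..card (range f)}}. (-1::int) ^ card (range f))
       = (\<Sum>\<alpha>\<in>compositions CARD('n). (-1) ^ length \<alpha> * int (card {f. P f \<and> (\<forall>j. card {i. f i = j} = ea \<alpha> j)}))"
proof -
  let ?G = "{f :: 'n \<Rightarrow> nat. P f \<and> range f = {1..card (range f)}}"
  have img: "content ` ?G \<subseteq> compositions CARD('n)"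
  proof
    fix c assume "c \<in> content ` ?G"
    then obtain f where f: "P f" "range f = {1..card (range f)}" and c: "c = content f" by auto
    have pos: "\<forall>a\<in>set c. 0 < a"
    proof
      fix a assume "a \<in> set c"
      then obtain j where j: "j \<in> {1..<card (range f) + 1}" "a = card {i. f i = j}"
        unfolding c content_def by auto
      then have "j \<in> range f" using f(2) by auto
      then have "{i. f i = j} \<noteq> {}" by auto
      then show "0 < a" using j by (simp add: card_gt_0_iff)
    qed
    have "sum_list c = (\<Sum>j\<in>{1..<card (range f) + 1}. card {i. f i = j})"
      unfolding c content_def by (simp add: sum_list_distinct_conv_sum_set)
    also have "{1..<card (range f) + 1} = range f" using f(2) by (metis atLeastLessThanSuc_atLeastAtMost Suc_eq_plus1)
    also have "(\<Sum>j\<in>range f. card {i. f i = j}) = (\<Sum>j\<in>range f. \<Sum>x\<in>{x \<in> UNIV. f x = j}. (1::nat))"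
      by simp
    also have "\<dots> = (\<Sum>x\<in>(UNIV::'n set). (1::nat))" using sum.group[of UNIV "range f" f "\<lambda>_. (1::nat)"] by simp
    also have "\<dots> = CARD('n)" by simp
    finally show "c \<in> compositions CARD('n)" using pos by (simp add: compositions_def)
  qed
  have "(\<Sum>f\<in>?G. (-1::int) ^ card (range f))
     = (\<Sum>\<alpha>\<in>compositions CARD('n). \<Sum>f\<in>{f \<in> ?G. content f = \<alpha>}. (-1::int) ^ card (range f))"
    using sum.group[OF finite_surjlike finite_compositions img, of "\<lambda>f. (-1::int) ^ card (range f)"]
    by simp
  also have "\<dots> = (\<Sum>\<alpha>\<in>compositions CARD('n). (-1) ^ length \<alpha> * int (card {f. P f \<and> (\<forall>j. card {i. f i = j} = ea \<alpha> j)}))"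
  proof (rule sum.cong[OF refl])
    fix \<alpha> assume a: "\<alpha> \<in> compositions CARD('n)"
    have apos: "\<forall>a\<in>set \<alpha>. 0 < a" using a by (simp add: compositions_def)
    have fib: "{f \<in> ?G. content f = \<alpha>} = {f. P f \<and> (\<forall>j. card {i. f i = j} = ea \<alpha> j)}"
    proof
      show "{f \<in> ?G. content f = \<alpha>} \<subseteq> {f. P f \<and> (\<forall>j. card {i. f i = j} = ea \<alpha> j)}"
      proof
        fix f :: "'n \<Rightarrow> nat" assume "f \<in> {f \<in> ?G. content f = \<alpha>}"
        then have f: "P f" "range f = {1..card (range f)}" and c: "content f = \<alpha>" by auto
        have len: "length \<alpha> = card (range f)" using c by (auto simp: content_def)
        have "card {i. f i = j} = ea \<alpha> j" for j
        proof (cases "1 \<le> j \<and> j \<le> card (range f)")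
          case True
          then have "\<alpha> ! (j - 1) = card {i. f i = j}"
            unfolding c[symmetric] content_def by (auto simp: nth_upt)
          then show ?thesis using True len by (simp add: ea_def)
        next
          case False
          then have "j \<notin> range f" using f(2) by auto
          then have "{i. f i = j} = {}" by auto
          moreover have "ea \<alpha> j = 0" using False len unfolding ea_def by auto
          ultimately show ?thesis by simp
        qed
        then show "f \<in> {f. P f \<and> (\<forall>j. card {i. f i = j} = ea \<alpha> j)}" using f by auto
      qed
      show "{f. P f \<and> (\<forall>j. card {i. f i = j} = ea \<alpha> j)} \<subseteq> {f \<in> ?G. content f = \<alpha>}"
      proof
        fix f :: "'n \<Rightarrow> nat" assume "f \<in> {f. P f \<and> (\<forall>j. card {i. f i = j} = ea \<alpha> j)}"
        then have f: "P f" and e: "\<forall>j. card {i. f i = j} = ea \<alpha> j" by auto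
        have rng: "range f = {1..length \<alpha>}"
        proof -
          have "j \<in> range f \<longleftrightarrow> j \<in> {1..length \<alpha>}" for j
          proof -
            have "j \<in> range f \<longleftrightarrow> {i. f i = j} \<noteq> {}" by auto
            also have "\<dots> \<longleftrightarrow> 0 < card {i. f i = j}" by (simp add: card_gt_0_iff)
            also have "\<dots> \<longleftrightarrow> j \<in> {1..length \<alpha>}" using e ea_pos[OF apos] by auto
            finally show ?thesis .
          qed
          then show ?thesis by blast
        qed
        moreover have "content f = \<alpha>"
          unfolding content_def rng using e by (intro nth_equalityI) (auto simp: ea_def nth_upt)
        ultimately show "f \<in> {f \<in> ?G. content f = \<alpha>}" using f by auto
      qed
    qed
    have "(\<Sum>f\<in>{f \<in> ?G. content f = \<alpha>}. (-1::int) ^ card (range f))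
        = (\<Sum>f\<in>{f \<in> ?G. content f = \<alpha>}. (-1::int) ^ length \<alpha>)"
    proof (rule sum.cong[OF refl])
      fix f assume "f \<in> {f \<in> ?G. content f = \<alpha>}"
      then show "(-1::int) ^ card (range f) = (-1) ^ length \<alpha>" by (auto simp: content_def)
    qed
    also have "\<dots> = (-1) ^ length \<alpha> * int (card {f \<in> ?G. content f = \<alpha>})" by simp
    finally show "(\<Sum>f\<in>{f \<in> ?G. content f = \<alpha>}. (-1::int) ^ card (range f))
        = (-1) ^ length \<alpha> * int (card {f. P f \<and> (\<forall>j. card {i. f i = j} = ea \<alpha> j)})"
      using fib by simp
  qed
  finally show ?thesis .
qed


lemma dotc_expand: "dotc c y = (\<Sum>i\<in>UNIV. c i * y $ i)"
  by (simp add: dotc_def inner_vec_def)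

lemma dotc_scaleR: "dotc c (u *\<^sub>R x) = u * dotc c x"
  by (simp add: dotc_def)

lemma umax_extreme:
  assumes v: "v \<in> S" and mx: "\<forall>y\<in>S. dotc c y \<le> dotc c v"
    and un: "\<forall>y\<in>S. dotc c y = dotc c v \<longrightarrow> y = v"
  shows "v extreme_point_of S"
  unfolding extreme_point_of_def
proof (intro conjI ballI v)
  fix a b assume a: "a \<in> S" and b: "b \<in> S"
  show "v \<notin> open_segment a b"
  proof
    assume "v \<in> open_segment a b"
    then obtain u where u: "0 \<le> u" "u \<le> 1" and vu: "v = (1 - u) *\<^sub>R a + u *\<^sub>R b"
      and va: "v \<noteq> a" and vb: "v \<noteq> b"
      unfolding open_segment_def closed_segment_def by auto
    have d: "dotc c v = (1 - u) * dotc c a + u * dotc c b"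
      unfolding vu dotc_add dotc_scaleR ..
    have da: "dotc c a \<le> dotc c v" and db: "dotc c b \<le> dotc c v" using mx a b by auto
    have "dotc c a \<noteq> dotc c v" using un a va by auto
    then have lt: "dotc c a < dotc c v" using da by simp
    have "u \<noteq> 1" using vu vb by auto
    then have "(1 - u) * dotc c a < (1 - u) * dotc c v" using u lt by (intro mult_strict_left_mono) auto
    moreover have "u * dotc c b \<le> u * dotc c v" using u db by (intro mult_left_mono) auto
    moreover have "(1 - u) * dotc c v + u * dotc c v = dotc c v" by (simp add: algebra_simps)
    ultimately show False using d by linarith
  qed
qed

lemma extreme_exposed:
  assumes "v extreme_point_of nestohedron B"
  shows "\<exists>c. v \<in> nestohedron B \<and> (\<forall>y\<in>nestohedron B. dotc c y \<le> dotc c v)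
            \<and> (\<forall>y\<in>nestohedron B. dotc c y = dotc c v \<longrightarrow> y = v)"
proof -
  have "{v} face_of nestohedron B" using assms by (simp add: face_of_singleton)
  then have "{v} exposed_face_of nestohedron B"
    using exposed_face_of_polyhedron[OF polytope_imp_polyhedron[OF nesto_polytope]] by blast
  then obtain a b where ab: "nestohedron B \<subseteq> {x. a \<bullet> x \<le> b}" "{v} = nestohedron B \<inter> {x. a \<bullet> x = b}"
    unfolding exposed_face_of_def by blast
  have dc: "dotc (\<lambda>i. a $ i) x = a \<bullet> x" for x by (simp add: dotc_def vec_lambda_eta)
  have v: "v \<in> nestohedron B" "a \<bullet> v = b" using ab(2) by auto
  show ?thesis
  proof (intro exI[of _ "\<lambda>i. a $ i"] conjI ballI impI)
    show "v \<in> nestohedron B" using v(1) .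
    fix y assume y: "y \<in> nestohedron B"
    show "dotc (\<lambda>i. a $ i) y \<le> dotc (\<lambda>i. a $ i) v" unfolding dc using ab(1) v(2) y by auto
  next
    fix y assume y: "y \<in> nestohedron B" and e: "dotc (\<lambda>i. a $ i) y = dotc (\<lambda>i. a $ i) v"
    then have "y \<in> nestohedron B \<inter> {x. a \<bullet> x = b}" unfolding dc using v(2) by auto
    then show "y = v" using ab(2) by blast
  qed
qed

definition rk :: "('n::finite \<Rightarrow> real) \<Rightarrow> 'n \<Rightarrow> nat" where
  "rk c i = card {x \<in> range c. x \<le> c i}"

lemma rk_less: assumes "c i < c j" shows "rk c i < rk c j"
proof -
  have "{x \<in> range c. x \<le> c i} \<subset> {x \<in> range c. x \<le> c j}"
  proof (rule psubsetI)
    show "{x \<in> range c. x \<le> c i} \<subseteq> {x \<in> range c. x \<le> c j}" using assms by auto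
    have "c j \<in> {x \<in> range c. x \<le> c j}" "c j \<notin> {x \<in> range c. x \<le> c i}" using assms by auto
    then show "{x \<in> range c. x \<le> c i} \<noteq> {x \<in> range c. x \<le> c j}" by blast
  qed
  then show ?thesis unfolding rk_def by (intro psubset_card_mono) auto
qed

lemma rk_le: "c i \<le> c j \<Longrightarrow> rk c i \<le> rk c j"
  unfolding rk_def by (rule card_mono) auto

lemma rk_range: "range (rk c) = {1..card (range (rk c))}"
proof -
  define h where "h x = card {y \<in> range c. y \<le> x}" for x
  define K where "K = card (range c)"
  have rr: "range (rk c) = h ` range c" unfolding rk_def h_def by auto
  have hlt: "h x < h y" if hx: "x \<in> range c" and hy: "y \<in> range c" and hxy: "x < y" for x y
  proof -
    obtain i j where ij: "x = c i" "y = c j" using hx hy by blast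
    then show ?thesis using rk_less[of c i j] hxy unfolding h_def rk_def by simp
  qed
  have inj: "inj_on h (range c)"
  proof (rule inj_onI)
    fix x y assume "x \<in> range c" "y \<in> range c" "h x = h y"
    then show "x = y" using hlt by (metis less_irrefl linorder_neqE_linordered_idom)
  qed
  have sub: "h ` range c \<subseteq> {1..K}"
  proof
    fix z assume "z \<in> h ` range c"
    then obtain x where x: "x \<in> range c" "z = h x" by auto
    have "h x \<ge> 1" unfolding h_def using x(1) by (simp add: Suc_le_eq card_gt_0_iff) blast
    moreover have "h x \<le> K" unfolding h_def K_def by (rule card_mono) auto
    ultimately show "z \<in> {1..K}" using x by auto
  qed
  have ck: "card (h ` range c) = K" using inj by (simp add: card_image K_def)
  have "h ` range c = {1..K}" using sub ck by (intro card_subset_eq) auto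
  then show ?thesis using rr ck by simp
qed

lemma good_rk: assumes "good B c G" shows "good B (\<lambda>i. real (rk c i)) G"
  unfolding good_def
proof (intro ballI conjI impI)
  fix I assume I: "I \<in> B"
  show "G I \<in> I" using assms I unfolding good_def by blast
  fix j assume "j \<in> I" "j \<noteq> G I"
  then have "c j < c (G I)" using assms I unfolding good_def by blast
  then show "real (rk c j) < real (rk c (G I))" using rk_less by simp
qed

abbreviation cf :: "('n \<Rightarrow> nat) \<Rightarrow> 'n \<Rightarrow> real" where "cf f \<equiv> (\<lambda>i. real (f i))"

lemma generic_dotc: "generic Q f \<longleftrightarrow> (\<forall>i. 1 \<le> f i) \<and>
     (\<exists>!x. x \<in> Q \<and> (\<forall>y\<in>Q. dotc (cf f) y \<le> dotc (cf f) x))"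
  by (simp add: generic_def dotc_expand)

definition xpt :: "(real^'n::finite) set \<Rightarrow> ('n \<Rightarrow> nat) \<Rightarrow> real^'n" where
  "xpt Q f = (THE x. x \<in> Q \<and> (\<forall>y\<in>Q. dotc (cf f) y \<le> dotc (cf f) x))"

lemma good_generic:
  assumes "good B (cf f) G" "\<forall>i. 1 \<le> f i"
  shows "generic (nestohedron B) f" "xpt (nestohedron B) f = pt B G"
proof -
  note L = L1[OF assms(1)]
  have u: "x = pt B G" if "x \<in> nestohedron B" "\<forall>y\<in>nestohedron B. dotc (cf f) y \<le> dotc (cf f) x" for x
  proof -
    have "dotc (cf f) (pt B G) \<le> dotc (cf f) x" using that L(1) by auto
    moreover have "dotc (cf f) x \<le> dotc (cf f) (pt B G)" using that L(2) by auto
    ultimately show ?thesis using L(3) that(1) by auto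
  qed
  have P: "pt B G \<in> nestohedron B \<and> (\<forall>y\<in>nestohedron B. dotc (cf f) y \<le> dotc (cf f) (pt B G))"
    using L(1,2) by blast
  have ex: "\<exists>!x. x \<in> nestohedron B \<and> (\<forall>y\<in>nestohedron B. dotc (cf f) y \<le> dotc (cf f) x)"
  proof (rule ex1I[of _ "pt B G"])
    show "pt B G \<in> nestohedron B \<and> (\<forall>y\<in>nestohedron B. dotc (cf f) y \<le> dotc (cf f) (pt B G))"
      by (rule P)
    fix x assume "x \<in> nestohedron B \<and> (\<forall>y\<in>nestohedron B. dotc (cf f) y \<le> dotc (cf f) x)"
    then show "x = pt B G" using u by blast
  qed
  show "generic (nestohedron B) f"
    unfolding generic_dotc using assms(2) ex by blast
  show "xpt (nestohedron B) f = pt B G"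
    unfolding xpt_def
  proof (rule the_equality)
    show "pt B G \<in> nestohedron B \<and> (\<forall>y\<in>nestohedron B. dotc (cf f) y \<le> dotc (cf f) (pt B G))"
      by (rule P)
    fix x assume "x \<in> nestohedron B \<and> (\<forall>y\<in>nestohedron B. dotc (cf f) y \<le> dotc (cf f) x)"
    then show "x = pt B G" using u by blast
  qed
qed

lemma generic_good:
  assumes Bne: "\<forall>I\<in>B. I \<noteq> {}" and g: "generic (nestohedron B) f"
  shows "\<exists>G. good B (cf f) G \<and> xpt (nestohedron B) f = pt B G"
proof -
  have ex: "\<exists>!x. x \<in> nestohedron B \<and> (\<forall>y\<in>nestohedron B. dotc (cf f) y \<le> dotc (cf f) x)"
    using g unfolding generic_dotc by blast
  then obtain x where x: "x \<in> nestohedron B" "\<forall>y\<in>nestohedron B. dotc (cf f) y \<le> dotc (cf f) x"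
    by blast
  have un: "\<forall>y\<in>nestohedron B. dotc (cf f) y = dotc (cf f) x \<longrightarrow> y = x"
  proof (intro ballI impI)
    fix y assume y: "y \<in> nestohedron B" "dotc (cf f) y = dotc (cf f) x"
    then have "y \<in> nestohedron B \<and> (\<forall>z\<in>nestohedron B. dotc (cf f) z \<le> dotc (cf f) y)" using x by simp
    moreover have "x \<in> nestohedron B \<and> (\<forall>z\<in>nestohedron B. dotc (cf f) z \<le> dotc (cf f) x)" using x by simp
    moreover obtain w where "\<forall>z. z \<in> nestohedron B \<and> (\<forall>u\<in>nestohedron B. dotc (cf f) u \<le> dotc (cf f) z) \<longrightarrow> z = w"
      using ex unfolding Ex1_def by blast
    ultimately show "y = x" by metis
  qed
  obtain G where G: "good B (cf f) G" "x = pt B G" using L2[OF Bne x(1) x(2) un] by blast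
  have "\<forall>i. 1 \<le> f i" using g unfolding generic_def by blast
  then have "xpt (nestohedron B) f = pt B G" using good_generic(2)[OF G(1)] by blast
  then show ?thesis using G by blast
qed


theorem mainTheorem8:
  fixes B :: "('n::finite) set set" and \<zeta> :: "nat list \<Rightarrow> int"
  assumes "connected_building_set B"
    and "\<forall>e. int (F_coeff (nestohedron B) e) =
               (\<Sum>\<alpha>\<in>compositions CARD('n). \<zeta> \<alpha> * M_coeff \<alpha> e)"
  shows "(\<Sum>\<alpha>\<in>compositions CARD('n). (-1) ^ length \<alpha> * \<zeta> \<alpha>)
           = (-1) ^ CARD('n) * int (num_vertices (nestohedron B))"
proof -
  define N where "N = nestohedron B"
  have Bne: "\<forall>I\<in>B. I \<noteq> {}" using assms(1) unfolding connected_building_set_def building_set_def by blast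
  define Gen where "Gen = {f :: 'n \<Rightarrow> nat. generic N f \<and> range f = {1..card (range f)}}"
  have finGen: "finite Gen" unfolding Gen_def by (rule finite_surjlike)
  have S1: "(\<Sum>\<alpha>\<in>compositions CARD('n). (-1) ^ length \<alpha> * \<zeta> \<alpha>)
     = (\<Sum>\<alpha>\<in>compositions CARD('n). (-1) ^ length \<alpha> * int (card {f. generic N f \<and> (\<forall>j. card {i. f i = j} = ea \<alpha> j)}))"
  proof (rule sum.cong[OF refl])
    fix \<alpha> assume a: "\<alpha> \<in> compositions CARD('n)"
    show "(-1) ^ length \<alpha> * \<zeta> \<alpha> = (-1) ^ length \<alpha> * int (card {f. generic N f \<and> (\<forall>j. card {i. f i = j} = ea \<alpha> j)})"
      using zeta_eq[OF assms(2) a] unfolding F_coeff_def N_def by simp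
  qed
  also have "\<dots> = (\<Sum>f\<in>Gen. (-1::int) ^ card (range f))"
    unfolding Gen_def by (rule group_compositions[symmetric])
  finally have S12: "(\<Sum>\<alpha>\<in>compositions CARD('n). (-1) ^ length \<alpha> * \<zeta> \<alpha>) = (\<Sum>f\<in>Gen. (-1::int) ^ card (range f))" .
  define V where "V = xpt N ` Gen"
  have finV: "finite V" unfolding V_def using finGen by simp
  have S3: "(\<Sum>f\<in>Gen. (-1::int) ^ card (range f)) = (\<Sum>v\<in>V. \<Sum>f\<in>{f \<in> Gen. xpt N f = v}. (-1::int) ^ card (range f))"
    using sum.group[OF finGen finV, of "xpt N" "\<lambda>f. (-1::int) ^ card (range f)"] unfolding V_def by simp
  have fib: "(\<Sum>f\<in>{f \<in> Gen. xpt N f = v}. (-1::int) ^ card (range f)) = (-1) ^ CARD('n)" if v: "v \<in> V" for v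
  proof -
    obtain f0 where f0: "f0 \<in> Gen" "v = xpt N f0" using v unfolding V_def by blast
    obtain G0 where G0: "good B (cf f0) G0" "xpt N f0 = pt B G0"
      using generic_good[OF Bne] f0(1) unfolding Gen_def N_def by blast
    define R where "R = {(G0 I, j) | I j. I \<in> B \<and> j \<in> I \<and> j \<noteq> G0 I}"
    have wit: "\<forall>(a, b)\<in>R. f0 b < f0 a" using G0(1) unfolding R_def good_def by auto
    have fe: "{f \<in> Gen. xpt N f = v} = W R UNIV"
    proof
      show "{f \<in> Gen. xpt N f = v} \<subseteq> W R UNIV"
      proof
        fix f assume "f \<in> {f \<in> Gen. xpt N f = v}"
        then have fg: "generic N f" and fr: "range f = {1..card (range f)}" and fv: "xpt N f = v"
          unfolding Gen_def by auto
        obtain G where G: "good B (cf f) G" "xpt N f = pt B G"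
          using generic_good[OF Bne] fg unfolding N_def by blast
        have eqpt: "pt B G = pt B G0" using G(2) fv f0(2) G0(2) by simp
        have le: "\<forall>I\<in>B. real (f (G0 I)) \<le> real (f (G I))"
        proof
          fix I assume I: "I \<in> B"
          have "G0 I \<in> I" using G0(1) I unfolding good_def by blast
          then show "real (f (G0 I)) \<le> real (f (G I))" using G(1) I unfolding good_def
            by (metis less_imp_le order_refl)
        qed
        have sums: "(\<Sum>I\<in>B. real (f (G0 I))) = (\<Sum>I\<in>B. real (f (G I)))"
          using eqpt dotc_pt[of "cf f" B G] dotc_pt[of "cf f" B G0] by simp
        have GG: "G I = G0 I" if I: "I \<in> B" for I
        proof (rule ccontr)
          assume ne: "G I \<noteq> G0 I"
          have "G0 I \<in> I" using G0(1) I unfolding good_def by blast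
          then have "real (f (G0 I)) < real (f (G I))" using G(1) I ne unfolding good_def by auto
          moreover have "real (f (G0 I)) = real (f (G I))"
            by (rule sum_le_eq[OF finite le sums I])
          ultimately show False by simp
        qed
        show "f \<in> W R UNIV"
          unfolding W_def
        proof (intro CollectI conjI allI impI)
          show "f ` UNIV = {1..card (f ` UNIV)}" using fr .
        next
          fix a b assume "(a, b) \<in> R"
          then obtain I where I: "I \<in> B" "a = G0 I" "b \<in> I" "b \<noteq> G0 I" unfolding R_def by blast
          then have "real (f b) < real (f (G I))" using G(1) GG[OF I(1)] unfolding good_def by auto
          then show "f b < f a" using GG[OF I(1)] I(2) by simp
        qed simp
      qed
      show "W R UNIV \<subseteq> {f \<in> Gen. xpt N f = v}"
      proof
        fix f assume "f \<in> W R UNIV"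
        then have fr: "range f = {1..card (range f)}" and comp: "\<forall>a b. (a, b) \<in> R \<longrightarrow> f b < f a"
          unfolding W_def by auto
        have f1: "\<forall>i. 1 \<le> f i"
        proof
          fix i have "f i \<in> range f" by simp
          then show "1 \<le> f i" using fr by auto
        qed
        have gd: "good B (cf f) G0"
          unfolding good_def
        proof (intro ballI conjI impI)
          fix I assume I: "I \<in> B"
          show "G0 I \<in> I" using G0(1) I unfolding good_def by blast
          fix j assume "j \<in> I" "j \<noteq> G0 I"
          then have "(G0 I, j) \<in> R" using I unfolding R_def by blast
          then show "real (f j) < real (f (G0 I))" using comp by simp
        qed
        have "generic N f" "xpt N f = pt B G0" using good_generic[OF gd f1] unfolding N_def by auto
        then show "f \<in> {f \<in> Gen. xpt N f = v}" using fr f0(2) G0(2) unfolding Gen_def by auto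
      qed
    qed
    have "(\<Sum>f\<in>W R UNIV. (-1::int) ^ card (f ` UNIV)) = (-1) ^ CARD('n)"
      by (rule A_rec[OF wit]) simp
    then show ?thesis using fe by simp
  qed
  have VE: "V = {v. v extreme_point_of N}"
  proof
    show "V \<subseteq> {v. v extreme_point_of N}"
    proof
      fix v assume "v \<in> V"
      then obtain f where f: "f \<in> Gen" "v = xpt N f" unfolding V_def by blast
      obtain G where G: "good B (cf f) G" "xpt N f = pt B G"
        using generic_good[OF Bne] f(1) unfolding Gen_def N_def by blast
      note L = L1[OF G(1)]
      have "pt B G extreme_point_of N"
        unfolding N_def by (rule umax_extreme[OF L(1) L(2) L(3)])
      then show "v \<in> {v. v extreme_point_of N}" using f(2) G(2) by simp
    qed
    show "{v. v extreme_point_of N} \<subseteq> V"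
    proof
      fix v assume "v \<in> {v. v extreme_point_of N}"
      then obtain c where c: "v \<in> N" "\<forall>y\<in>N. dotc c y \<le> dotc c v" "\<forall>y\<in>N. dotc c y = dotc c v \<longrightarrow> y = v"
        using extreme_exposed unfolding N_def by blast
      obtain G where G: "good B c G" "v = pt B G" using L2[OF Bne] c unfolding N_def by blast
      define f where "f = rk c"
      have gd: "good B (cf f) G" unfolding f_def by (rule good_rk[OF G(1)])
      have fr: "range f = {1..card (range f)}" unfolding f_def by (rule rk_range)
      have f1: "\<forall>i. 1 \<le> f i"
      proof
        fix i have "f i \<in> range f" by simp
        then show "1 \<le> f i" using fr by auto
      qed
      have "generic N f" "xpt N f = pt B G" using good_generic[OF gd f1] unfolding N_def by auto
      then have "f \<in> Gen" "xpt N f = v" using fr G(2) unfolding Gen_def by auto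
      then show "v \<in> V" unfolding V_def by blast
    qed
  qed
  have "(\<Sum>\<alpha>\<in>compositions CARD('n). (-1) ^ length \<alpha> * \<zeta> \<alpha>) = (\<Sum>v\<in>V. (-1::int) ^ CARD('n))"
    using S12 S3 fib by simp
  also have "\<dots> = (-1) ^ CARD('n) * int (card V)" by simp
  also have "card V = num_vertices (nestohedron B)" unfolding num_vertices_def VE N_def ..
  finally show ?thesis .
qed


end
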